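(* Let $M\ge 1$ be an integer and let $\tau>0$, $P_0>0$, $\bar{P}>0$, $R_0>0$, $R_i>0$. Let $|h_0|^2,|h_1|^2,\dots,|h_M|^2$ be independent random variables, each exponentially distributed with mean $1$, and let $|h_{(1)}|^2\le\cdots\le|h_{(M)}|^2$ be the order statistics of $|h_1|^2,\dots,|h_M|^2$. Let $N$ be the (random) number of indices $m\in\{1,\dots,M\}$ with $|h_m|^2>\tau$ (so the admitted users have gains $|h_{(M-N+1)}|^2,\dots,|h_{(M)}|^2$). For $n\ge 1$ let $R_{sum,n}=nR_i$ and $\epsilon_{s,n}=2^{R_{sum,n}}-1$, and let $\epsilon_0=2^{R_0}-1$. Define $$\mathbb{P}_0^{\mathrm{II,OL}}=1-\sum_{n=1}^{M}\mathbb{P}(N=n)\,Q_3(n)-\mathbb{P}(N=0)\,\mathbb{P}\left(\log_2(1+|h_0|^2P_0)>R_0\right),$$ where $$Q_3(n)=\mathbb{P}\left(\log_2(1+|h_0|^2P_0)>R_0,\ \log_2\left(1+\frac{\bar{P}\sum_{j=M-n+1}^{M}|h_{(j)}|^2}{1+|h_0|^2P_0}\right)>R_{sum,n}\ \middle|\ N=n\right).$$ Then, with $\tau_n=\frac{n\tau\epsilon_{s,n}^{-1}\bar{P}-1}{P_0}$ and $\bar{\tau}_n=\max\left(\tau_n,\epsilon_0P_0^{-1}\right)$, \begin{align*} \mathbb{P}_0^{\mathrm{II,OL}} =& 1-\sum_{n=1}^{M}\frac{M!}{n!(M-n)!}e^{-n\tau}\left(1-e^{-\tau}\right)^{M-n}\Bigg(\sum_{l=1}^{n-1}\frac{\epsilon_{s,n}^l\bar{P}^{-l}P_0^l}{l!}e^{-\tau_n}\frac{\Gamma\left(l+1,(\bar{\tau}_n-\tau_n)(1+\epsilon_{s,n}\bar{P}^{-1}P_0)\right)}{(1+\epsilon_{s,n}\bar{P}^{-1}P_0)^{l+1}}\\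 &+e^{-\epsilon_0P_0^{-1}}-e^{-\bar{\tau}_n}+\frac{e^{-\tau_n-(\bar{\tau}_n-\tau_n)(1+\epsilon_{s,n}\bar{P}^{-1}P_0)}}{1+\epsilon_{s,n}\bar{P}^{-1}P_0}\Bigg)-\left(1-e^{-\tau}\right)^Me^{-\epsilon_0P_0^{-1}}, \end{align*} where $\Gamma(a,x)=\int_x^\infty t^{a-1}e^{-t}\,dt$ is the upper incomplete Gamma function.
   Context: Uplink semi-grant-free NOMA model: a grant-based user $\mathrm{U}_0$ with channel $h_0$ and transmit SNR $P_0$, and $M$ grant-free users with channels $h_m$ and common transmit SNR $\bar{P}$; all channels are i.i.d. Rayleigh fading (gains i.i.d. exponential with mean 1), noise power normalized to 1. In the "Type II open-loop" protocol the base station broadcasts a threshold $\tau$ and exactly the grant-free users whose channel gain exceeds $\tau$ transmit, each with target rate $R_i$; the base station decodes the grant-free users first (successful decoding modeled by the sum-rate criterion with target sum rate $nR_i$, treating $\mathrm{U}_0$'s signal as interference) and $\mathrm{U}_0$'s message last, so $\mathrm{U}_0$ is successful when both events in $Q_3$ hold (or, when $N=0$, when its interference-free rate exceeds $R_0$); $\mathbb{P}_0^{\mathrm{II,OL}}$ is $\mathrm{U}_0$'s outage probability. *)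

theory Defs
  imports "HOL-Probability.Probability"
begin

definition upper_Gamma :: "real \<Rightarrow> real \<Rightarrow> real" where
  "upper_Gamma a x = (LINT t:{x<..}|lborel. t powr (a - 1) * exp (- t))"

definition ostat :: "(nat \<Rightarrow> 'a \<Rightarrow> real) \<Rightarrow> nat \<Rightarrow> nat \<Rightarrow> 'a \<Rightarrow> real" where
  "ostat h M j \<omega> = sort (map (\<lambda>m. h m \<omega>) [1..<M+1]) ! (j - 1)"

definition Nadm :: "(nat \<Rightarrow> 'a \<Rightarrow> real) \<Rightarrow> nat \<Rightarrow> real \<Rightarrow> 'a \<Rightarrow> nat" where
  "Nadm h M \<tau> \<omega> = card {m \<in> {1..M}. h m \<omega> > \<tau>}"

definition Q3 :: "'a measure \<Rightarrow> (nat \<Rightarrow> 'a \<Rightarrow> real) \<Rightarrow> nat \<Rightarrow> real \<Rightarrow> real \<Rightarrow> real \<Rightarrow> real \<Rightarrow> real \<Rightarrow> nat \<Rightarrow> real" where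
  "Q3 Mp h M \<tau> P0 Pbar R0 Ri n =
     measure Mp {\<omega> \<in> space Mp. log 2 (1 + h 0 \<omega> * P0) > R0 \<and>
        log 2 (1 + Pbar * (\<Sum>j = M - n + 1..M. ostat h M j \<omega>) / (1 + h 0 \<omega> * P0)) > real n * Ri \<and>
        Nadm h M \<tau> \<omega> = n}
     / measure Mp {\<omega> \<in> space Mp. Nadm h M \<tau> \<omega> = n}"

definition P0_IIOL :: "'a measure \<Rightarrow> (nat \<Rightarrow> 'a \<Rightarrow> real) \<Rightarrow> nat \<Rightarrow> real \<Rightarrow> real \<Rightarrow> real \<Rightarrow> real \<Rightarrow> real \<Rightarrow> real" where
  "P0_IIOL Mp h M \<tau> P0 Pbar R0 Ri =
     1 - (\<Sum>n = 1..M. measure Mp {\<omega> \<in> space Mp. Nadm h M \<tau> \<omega> = n} * Q3 Mp h M \<tau> P0 Pbar R0 Ri n)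
       - measure Mp {\<omega> \<in> space Mp. Nadm h M \<tau> \<omega> = 0}
         * measure Mp {\<omega> \<in> space Mp. log 2 (1 + h 0 \<omega> * P0) > R0}"

end

theory Submission
  imports Defs
begin

primrec Sg :: "real \<Rightarrow> nat \<Rightarrow> real \<Rightarrow> real" where
  "Sg c 0 u = 1 / c"
| "Sg c (Suc l) u = (u ^ Suc l + real (Suc l) * Sg c l u) / c"

lemma Sg_nonneg: "c > 0 \<Longrightarrow> u \<ge> 0 \<Longrightarrow> Sg c l u \<ge> 0"
  by (induction l) (auto intro!: divide_nonneg_pos add_nonneg_nonneg)

lemma Sg_deriv:
  assumes "c > 0"
  shows "((\<lambda>u. - exp (- c * u) * Sg c l u) has_real_derivative exp (- c * u) * u ^ l) (at u)"
proof (induction l)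
  case 0
  show ?case using assms
    by (auto intro!: derivative_eq_intros simp: field_simps)
next
  case (Suc l)
  have A: "((\<lambda>u. - exp (- c * u) * u ^ Suc l) has_real_derivative
      (c * exp (- c * u) * u ^ Suc l - exp (- c * u) * (real (Suc l) * u ^ l))) (at u)"
    apply (auto intro!: derivative_eq_intros simp: field_simps)
    apply (cases l)
     apply auto
    done
  have B: "((\<lambda>u. real (Suc l) * (- exp (- c * u) * Sg c l u)) has_real_derivative
      real (Suc l) * (exp (- c * u) * u ^ l)) (at u)"
    by (rule DERIV_cmult[OF Suc])
  have "((\<lambda>u. (- exp (- c * u) * u ^ Suc l + real (Suc l) * (- exp (- c * u) * Sg c l u)) / c)
     has_real_derivative ((c * exp (- c * u) * u ^ Suc l - exp (- c * u) * (real (Suc l) * u ^ l))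
        + real (Suc l) * (exp (- c * u) * u ^ l)) / c) (at u)"
    by (intro DERIV_cdivide DERIV_add A B)
  moreover have "((c * exp (- c * u) * u ^ Suc l - exp (- c * u) * (real (Suc l) * u ^ l))
        + real (Suc l) * (exp (- c * u) * u ^ l)) / c = exp (- c * u) * u ^ Suc l"
    using assms by (simp add: field_simps)
  moreover have "(\<lambda>u. (- exp (- c * u) * u ^ Suc l + real (Suc l) * (- exp (- c * u) * Sg c l u)) / c)
     = (\<lambda>u. - exp (- c * u) * Sg c (Suc l) u)"
    by (auto simp: fun_eq_iff field_simps)
  ultimately show ?case by simp
qed

lemma exp_pow_lim:
  assumes "c > 0"
  shows "((\<lambda>u::real. exp (- c * u) * u ^ k) \<longlongrightarrow> 0) at_top"
proof -
  have "((\<lambda>x. x ^ k / exp x) \<longlongrightarrow> (0::real)) at_top" by (rule tendsto_power_div_exp_0)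
  then have "((\<lambda>u. (c * u) ^ k / exp (c * u)) \<longlongrightarrow> 0) at_top"
    by (rule filterlim_compose) (use assms in \<open>auto intro!: filterlim_tendsto_pos_mult_at_top filterlim_ident\<close>)
  then have "((\<lambda>u. (c * u) ^ k / exp (c * u) / c ^ k) \<longlongrightarrow> 0 / c ^ k) at_top"
    by (intro tendsto_divide) (use assms in auto)
  moreover have "(\<lambda>u. (c * u) ^ k / exp (c * u) / c ^ k) = (\<lambda>u. exp (- c * u) * u ^ k)"
    using assms by (auto simp: fun_eq_iff power_mult_distrib exp_minus field_simps)
  ultimately show ?thesis by simp
qed

lemma Sg_lim:
  assumes "c > 0"
  shows "((\<lambda>u. - exp (- c * u) * Sg c l u) \<longlongrightarrow> 0) at_top"
proof (induction l)
  case 0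
  have "((\<lambda>u::real. - (exp (- c * u) * u ^ 0) / c) \<longlongrightarrow> - 0 / c) at_top"
    by (intro tendsto_intros exp_pow_lim assms) (use assms in auto)
  then show ?case by (simp add: field_simps)
next
  case (Suc l)
  have "((\<lambda>u. (- (exp (- c * u) * u ^ Suc l) + real (Suc l) * (- exp (- c * u) * Sg c l u)) / c)
      \<longlongrightarrow> (- 0 + real (Suc l) * 0) / c) at_top"
    by (intro tendsto_intros exp_pow_lim assms Suc) (use assms in auto)
  moreover have "(\<lambda>u. (- (exp (- c * u) * u ^ Suc l) + real (Suc l) * (- exp (- c * u) * Sg c l u)) / c)
     = (\<lambda>u. - exp (- c * u) * Sg c (Suc l) u)"
    by (auto simp: fun_eq_iff field_simps)
  ultimately show ?case by simp
qed

lemma GL: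
  assumes "c > 0" "d \<ge> 0"
  shows "(\<integral>\<^sup>+u. ennreal (exp (- c * u) * u ^ l) * indicator {d..} u \<partial>lborel)
     = ennreal (exp (- c * d) * Sg c l d)"
  by (subst nn_integral_FTC_atLeast[OF _ Sg_deriv[OF assms(1)] _ Sg_lim[OF assms(1)]])
     (use assms in auto)

lemma Sg_scale: "c > 0 \<Longrightarrow> Sg c l d = Sg 1 l (c * d) / c ^ (l + 1)"
  by (induction l) (auto simp: field_simps power_mult_distrib)

definition Et :: "nat \<Rightarrow> real \<Rightarrow> real" where
  "Et n z = (\<Sum>l<n. z ^ l / fact l)"

lemma Et_measurable[measurable]: "Et n \<in> borel_measurable borel"
  unfolding Et_def by measurable

lemma Et_Suc: "Et (Suc n) z = Et n z + z ^ n / fact n"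
  by (simp add: Et_def)

lemma Et_0[simp]: "Et 0 z = 0" by (simp add: Et_def)

lemma Et_Suc_zero[simp]: "Et (Suc n) 0 = 1"
  by (induction n) (auto simp: Et_Suc)

lemma Et_nonneg: "z \<ge> 0 \<Longrightarrow> Et n z \<ge> 0"
  unfolding Et_def by (intro sum_nonneg) auto

lemma Et_ge1: "z \<ge> 0 \<Longrightarrow> Et (Suc n) z \<ge> 1"
  by (induction n) (auto simp: Et_Suc intro: order_trans[OF _ add_increasing2[OF divide_nonneg_pos]])

lemma Et_deriv: "(Et (Suc n) has_real_derivative Et n z) (at z)"
proof (induction n)
  case 0
  show ?case by (simp add: Et_def)
next
  case (Suc n)
  have "((\<lambda>z. Et (Suc n) z + z ^ Suc n / fact (Suc n)) has_real_derivative
      Et n z + real (Suc n) * z ^ n / fact (Suc n)) (at z)"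
  proof (intro DERIV_add Suc)
    have "((\<lambda>z. z ^ Suc n / fact (Suc n)) has_real_derivative real (Suc n) * z ^ (Suc n - Suc 0) / fact (Suc n)) (at z)"
      by (intro DERIV_cdivide) (rule DERIV_pow)
    then show "((\<lambda>z. z ^ Suc n / fact (Suc n)) has_real_derivative real (Suc n) * z ^ n / fact (Suc n)) (at z)"
      by simp
  qed
  moreover have "Et n z + real (Suc n) * z ^ n / fact (Suc n) = Et (Suc n) z"
    by (simp add: Et_Suc)
  moreover have "(\<lambda>z. Et (Suc n) z + z ^ Suc n / fact (Suc n)) = Et (Suc (Suc n))"
    by (auto simp: fun_eq_iff Et_Suc)
  ultimately show ?case by simp
qed

definition Fn :: "real \<Rightarrow> nat \<Rightarrow> real \<Rightarrow> real" where
  "Fn \<tau> n s = exp (- (real n * \<tau>)) *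
     (if s < real n * \<tau> then 1 else exp (- (s - real n * \<tau>)) * Et n (s - real n * \<tau>))"

lemma Fn_measurable[measurable]: "Fn \<tau> n \<in> borel_measurable borel"
  unfolding Fn_def by measurable

lemma Fn_nonneg: "Fn \<tau> n s \<ge> 0"
  unfolding Fn_def by (auto intro!: mult_nonneg_nonneg Et_nonneg)

lemma AE_two: "AE x in lborel. (x::real) \<noteq> a \<and> x \<noteq> b"
  using AE_lborel_singleton[of a] AE_lborel_singleton[of b] by (simp add: AE_conj_iff)

lemma exp_tail: "(\<integral>\<^sup>+y. ennreal (exp (- y)) * indicator {d..} y \<partial>lborel) = ennreal (exp (- d))"
proof -
  have l: "((\<lambda>u::real. exp (- 1 * u) * u ^ 0) \<longlongrightarrow> 0) at_top"
    by (rule exp_pow_lim) simp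
  have "((\<lambda>u::real. - exp (- u)) \<longlongrightarrow> - 0) at_top"
    using l by (intro tendsto_minus) simp
  then show ?thesis
    by (subst nn_integral_FTC_atLeast[where F="\<lambda>y. - exp (- y)" and T=0])
       (auto intro!: derivative_eq_intros)
qed

lemma CL1:
  assumes tau: "\<tau> > 0"
  shows "(\<integral>\<^sup>+y. ennreal (exponential_density 1 y) * ennreal (if \<tau> < y then Fn \<tau> n (s - y) else 0) \<partial>lborel)
     = ennreal (Fn \<tau> (Suc n) s)"
proof (cases "s < real (Suc n) * \<tau>")
  case True
  have "(\<integral>\<^sup>+y. ennreal (exponential_density 1 y) * ennreal (if \<tau> < y then Fn \<tau> n (s - y) else 0) \<partial>lborel)
      = (\<integral>\<^sup>+y. ennreal (exp (- (real n * \<tau>))) * (ennreal (exp (- y)) * indicator {\<tau>..} y) \<partial>lborel)"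
  proof (rule nn_integral_cong_AE)
    show "AE y in lborel. ennreal (exponential_density 1 y) * ennreal (if \<tau> < y then Fn \<tau> n (s - y) else 0)
       = ennreal (exp (- (real n * \<tau>))) * (ennreal (exp (- y)) * indicator {\<tau>..} y)"
      using AE_lborel_singleton[of \<tau>]
    proof eventually_elim
      case (elim y)
      show ?case
      proof (cases "\<tau> < y")
        case True
        then have "s - y < real n * \<tau>" using \<open>s < real (Suc n) * \<tau>\<close> by (simp add: algebra_simps)
        then show ?thesis using True tau
          by (simp add: Fn_def exponential_density_def ennreal_mult[symmetric] mult_ac)
      next
        case False
        then show ?thesis using elim by (auto simp: indicator_def)
      qed
    qed
  qed
  also have "\<dots> = ennreal (exp (- (real n * \<tau>))) * ennreal (exp (- \<tau>))"
    by (subst nn_integral_cmult) (auto simp: exp_tail)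
  also have "\<dots> = ennreal (Fn \<tau> (Suc n) s)"
    using True by (simp add: Fn_def ennreal_mult[symmetric] exp_add[symmetric] algebra_simps)
  finally show ?thesis .
next
  case False
  define b where "b = s - real n * \<tau>"
  have tb: "\<tau> \<le> b" using False by (simp add: b_def algebra_simps)
  have "(\<integral>\<^sup>+y. ennreal (exponential_density 1 y) * ennreal (if \<tau> < y then Fn \<tau> n (s - y) else 0) \<partial>lborel)
      = (\<integral>\<^sup>+y. ennreal (exp (- s)) * (ennreal (Et n (b - y)) * indicator {\<tau>..b} y)
           + ennreal (exp (- (real n * \<tau>))) * (ennreal (exp (- y)) * indicator {b..} y) \<partial>lborel)"
  proof (rule nn_integral_cong_AE)
    show "AE y in lborel. ennreal (exponential_density 1 y) * ennreal (if \<tau> < y then Fn \<tau> n (s - y) else 0)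
       = ennreal (exp (- s)) * (ennreal (Et n (b - y)) * indicator {\<tau>..b} y)
           + ennreal (exp (- (real n * \<tau>))) * (ennreal (exp (- y)) * indicator {b..} y)"
      using AE_two[of \<tau> b]
    proof eventually_elim
      case (elim y)
      consider "y < \<tau>" | "\<tau> < y" "y < b" | "b < y" using elim tb by linarith
      then show ?case
      proof cases
        case 1
        then show ?thesis using tb by (auto simp: indicator_def)
      next
        case 2
        then have "\<not> s - y < real n * \<tau>" by (simp add: b_def algebra_simps)
        moreover have "exp (- y) * (exp (- (real n * \<tau>)) * exp (- (s - y - real n * \<tau>))) = exp (- s)"
          by (simp add: exp_add[symmetric])
        ultimately have "exponential_density 1 y * Fn \<tau> n (s - y) = exp (- s) * Et n (b - y)"
          using 2 tau by (simp add: Fn_def exponential_density_def b_def algebra_simps)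
        moreover have "exponential_density 1 y \<ge> 0" "Fn \<tau> n (s - y) \<ge> 0" "Et n (b - y) \<ge> 0"
          using 2 by (auto simp: Fn_nonneg exponential_density_def intro!: Et_nonneg)
        ultimately show ?thesis using 2 tau
          by (simp add: ennreal_mult[symmetric] indicator_def)
      next
        case 3
        then have "s - y < real n * \<tau>" by (simp add: b_def algebra_simps)
        then show ?thesis using 3 tau tb
          by (simp add: Fn_def exponential_density_def ennreal_mult[symmetric] mult_ac indicator_def)
      qed
    qed
  qed
  also have "\<dots> = ennreal (exp (- s)) * (\<integral>\<^sup>+y. ennreal (Et n (b - y)) * indicator {\<tau>..b} y \<partial>lborel)
      + ennreal (exp (- (real n * \<tau>))) * (\<integral>\<^sup>+y. ennreal (exp (- y)) * indicator {b..} y \<partial>lborel)"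
    by (subst nn_integral_add) (auto simp: nn_integral_cmult)
  also have "(\<integral>\<^sup>+y. ennreal (Et n (b - y)) * indicator {\<tau>..b} y \<partial>lborel) = ennreal (Et (Suc n) (b - \<tau>) - 1)"
  proof (subst nn_integral_FTC_Icc[where F="\<lambda>y. - Et (Suc n) (b - y)"])
    show "(\<lambda>y. Et n (b - y)) \<in> borel_measurable borel" by measurable
    show "\<And>x. x \<in> {\<tau>..b} \<Longrightarrow> ((\<lambda>y. - Et (Suc n) (b - y)) has_real_derivative Et n (b - x)) (at x)"
      by (auto intro!: derivative_eq_intros DERIV_chain2[OF Et_deriv])
    show "\<And>x. x \<in> {\<tau>..b} \<Longrightarrow> 0 \<le> Et n (b - x)" by (auto intro!: Et_nonneg)
  qed (use tb in auto)
  also have "(\<integral>\<^sup>+y. ennreal (exp (- y)) * indicator {b..} y \<partial>lborel) = ennreal (exp (- b))"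
    by (rule exp_tail)
  also have "ennreal (exp (- s)) * ennreal (Et (Suc n) (b - \<tau>) - 1)
      + ennreal (exp (- (real n * \<tau>))) * ennreal (exp (- b)) = ennreal (exp (- s) * Et (Suc n) (b - \<tau>))"
  proof -
    have "Et (Suc n) (b - \<tau>) \<ge> 1" using tb by (intro Et_ge1) simp
    moreover have "exp (- (real n * \<tau>)) * exp (- b) = exp (- s)"
      by (simp add: b_def exp_add[symmetric])
    ultimately show ?thesis
      by (simp add: ennreal_mult[symmetric] ennreal_plus[symmetric] del: ennreal_plus
           add: algebra_simps)
  qed
  also have "\<dots> = ennreal (Fn \<tau> (Suc n) s)"
  proof -
    have "exp (- (real (Suc n) * \<tau>)) * exp (- (s - real (Suc n) * \<tau>)) = exp (- s)"
      by (simp add: exp_add[symmetric])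
    then show ?thesis using False
      by (simp only: Fn_def if_False mult.assoc[symmetric]) (simp add: b_def algebra_simps)
  qed
  finally show ?thesis .
qed

lemma shift_piece:
  assumes a: "a \<ge> 0" and d: "\<tau>b \<ge> \<tau>n"
  shows "(\<integral>\<^sup>+x. ennreal (exp (- x) * exp (- (a * (x - \<tau>n))) * (x - \<tau>n) ^ l) * indicator {\<tau>b..} x \<partial>lborel)
    = ennreal (exp (- \<tau>n) * (exp (- (1 + a) * (\<tau>b - \<tau>n)) * Sg (1 + a) l (\<tau>b - \<tau>n)))"
proof -
  have "(\<integral>\<^sup>+x. ennreal (exp (- x) * exp (- (a * (x - \<tau>n))) * (x - \<tau>n) ^ l) * indicator {\<tau>b..} x \<partial>lborel)
     = ennreal \<bar>1::real\<bar> * (\<integral>\<^sup>+u. ennreal (exp (- (\<tau>n + 1 * u)) * exp (- (a * ((\<tau>n + 1 * u) - \<tau>n))) * ((\<tau>n + 1 * u) - \<tau>n) ^ l)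
           * indicator {\<tau>b..} (\<tau>n + 1 * u) \<partial>lborel)"
    by (rule nn_integral_real_affine) auto
  also have "\<dots> = (\<integral>\<^sup>+u. ennreal (exp (- (\<tau>n + 1 * u)) * exp (- (a * ((\<tau>n + 1 * u) - \<tau>n))) * ((\<tau>n + 1 * u) - \<tau>n) ^ l)
           * indicator {\<tau>b..} (\<tau>n + 1 * u) \<partial>lborel)"
    by simp
  also have "\<dots> = (\<integral>\<^sup>+u. ennreal (exp (- \<tau>n)) * (ennreal (exp (- (1 + a) * u) * u ^ l) * indicator {\<tau>b - \<tau>n..} u) \<partial>lborel)"
  proof (intro nn_integral_cong)
    fix u :: real
    have "exp (- (\<tau>n + u)) * exp (- (a * u)) = exp (- \<tau>n) * exp (- (1 + a) * u)"
      by (simp add: exp_add[symmetric] algebra_simps)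
    then show "ennreal (exp (- (\<tau>n + 1 * u)) * exp (- (a * ((\<tau>n + 1 * u) - \<tau>n))) * ((\<tau>n + 1 * u) - \<tau>n) ^ l)
           * indicator {\<tau>b..} (\<tau>n + 1 * u)
        = ennreal (exp (- \<tau>n)) * (ennreal (exp (- (1 + a) * u) * u ^ l) * indicator {\<tau>b - \<tau>n..} u)"
      using d by (auto simp: indicator_def ennreal_mult[symmetric] mult_ac)
  qed
  also have "\<dots> = ennreal (exp (- \<tau>n)) * ennreal (exp (- (1 + a) * (\<tau>b - \<tau>n)) * Sg (1 + a) l (\<tau>b - \<tau>n))"
    by (subst nn_integral_cmult) (use a d in \<open>auto simp: GL[of "1 + a" "\<tau>b - \<tau>n", simplified]\<close>)
  also have "\<dots> = ennreal (exp (- \<tau>n) * (exp (- (1 + a) * (\<tau>b - \<tau>n)) * Sg (1 + a) l (\<tau>b - \<tau>n)))"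
    using a d by (simp add: ennreal_mult Sg_nonneg)
  finally show ?thesis .
qed

lemma CL2:
  fixes \<tau> P0 Pbar es ep :: real and n :: nat
  assumes tau: "\<tau> > 0" and P0: "P0 > 0" and Pb: "Pbar > 0" and es: "es > 0" and ep: "ep > 0"
  assumes a_def: "a = es * P0 / Pbar" and \<tau>n_def: "\<tau>n = (real n * \<tau> * Pbar / es - 1) / P0"
    and \<tau>b_def: "\<tau>b = max \<tau>n (ep / P0)"
  shows "(\<integral>\<^sup>+x. ennreal (exponential_density 1 x) *
            ennreal (if ep / P0 < x then Fn \<tau> n (es * (1 + x * P0) / Pbar) else 0) \<partial>lborel)
   = ennreal (exp (- (real n * \<tau>)) * ((exp (- (ep / P0)) - exp (- \<tau>b))
       + (\<Sum>l<n. a ^ l / fact l * (exp (- \<tau>n) * (exp (- (1 + a) * (\<tau>b - \<tau>n)) * Sg (1 + a) l (\<tau>b - \<tau>n))))))"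
proof -
  have a0: "a > 0" using es P0 Pb by (simp add: a_def)
  have key: "es * (1 + x * P0) / Pbar - real n * \<tau> = a * (x - \<tau>n)" for x
    using es P0 Pb by (simp add: a_def \<tau>n_def field_simps)
  define g where "g l x = exp (- x) * exp (- (a * (x - \<tau>n))) * (x - \<tau>n) ^ l" for l x
  define r where "r x = exp (- (real n * \<tau>)) * (exp (- x) * indicator {ep / P0..\<tau>b} x
      + (\<Sum>l<n. a ^ l / fact l * (g l x * indicator {\<tau>b..} x)))" for x
  have tb1: "ep / P0 \<le> \<tau>b" "\<tau>n \<le> \<tau>b" by (auto simp: \<tau>b_def)
  have "(\<integral>\<^sup>+x. ennreal (exponential_density 1 x) *
            ennreal (if ep / P0 < x then Fn \<tau> n (es * (1 + x * P0) / Pbar) else 0) \<partial>lborel)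
      = (\<integral>\<^sup>+x. ennreal (r x) \<partial>lborel)"
  proof (rule nn_integral_cong_AE)
    show "AE x in lborel. ennreal (exponential_density 1 x) *
            ennreal (if ep / P0 < x then Fn \<tau> n (es * (1 + x * P0) / Pbar) else 0) = ennreal (r x)"
      using AE_two[of "ep / P0" \<tau>b]
    proof eventually_elim
      case (elim x)
      have x0: "ep / P0 < x \<Longrightarrow> 0 \<le> x" using ep P0 by (smt (verit) divide_pos_pos)
      consider "x < ep / P0" | "ep / P0 < x" "x < \<tau>b" | "\<tau>b < x" using elim tb1 by linarith
      then show ?case
      proof cases
        case 1
        then show ?thesis using tb1 by (auto simp: r_def indicator_def)
      next
        case 2
        then have "x < \<tau>n" by (auto simp: \<tau>b_def)
        then have "es * (1 + x * P0) / Pbar < real n * \<tau>"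
          using key[of x] a0 by (smt (verit) mult_pos_neg)
        then show ?thesis using 2 x0
          by (simp add: r_def Fn_def exponential_density_def indicator_def ennreal_mult[symmetric] mult_ac)
      next
        case 3
        then have "\<tau>n < x" "ep / P0 < x" using tb1 by auto
        then have nl: "\<not> es * (1 + x * P0) / Pbar < real n * \<tau>"
          using key[of x] a0 by (smt (verit) mult_pos_pos)
        have "exponential_density 1 x * Fn \<tau> n (es * (1 + x * P0) / Pbar) = r x"
        proof -
          have "exponential_density 1 x * Fn \<tau> n (es * (1 + x * P0) / Pbar)
             = exp (- x) * (exp (- (real n * \<tau>)) * (exp (- (a * (x - \<tau>n))) * Et n (a * (x - \<tau>n))))"
            using nl x0 \<open>ep / P0 < x\<close> by (simp add: exponential_density_def Fn_def key)
          also have "\<dots> = exp (- (real n * \<tau>)) * (\<Sum>l<n. a ^ l / fact l * g l x)"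
            by (simp add: Et_def g_def sum_distrib_left sum_distrib_right power_mult_distrib mult_ac)
          also have "\<dots> = r x"
            using 3 tb1 by (simp add: r_def indicator_def)
          finally show ?thesis .
        qed
        then show ?thesis using nl 3 x0 tb1 by (simp add: ennreal_mult[symmetric] exponential_density_def Fn_nonneg)
      qed
    qed
  qed
  also have "(\<integral>\<^sup>+x. ennreal (r x) \<partial>lborel) = (\<integral>\<^sup>+x. ennreal (exp (- (real n * \<tau>))) *
      (ennreal (exp (- x)) * indicator {ep / P0..\<tau>b} x
      + (\<Sum>l<n. ennreal (a ^ l / fact l) * (ennreal (g l x) * indicator {\<tau>b..} x))) \<partial>lborel)"
  proof (intro nn_integral_cong)
    fix x :: real
    have g0: "x \<in> {\<tau>b..} \<Longrightarrow> g l x \<ge> 0" for l using tb1 by (auto simp: g_def)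
    have "ennreal (r x) = ennreal (exp (- (real n * \<tau>))) * (ennreal (exp (- x) * indicator {ep / P0..\<tau>b} x)
      + ennreal (\<Sum>l<n. a ^ l / fact l * (g l x * indicator {\<tau>b..} x)))"
      unfolding r_def using a0 g0
      by (subst ennreal_mult, simp, (intro add_nonneg_nonneg sum_nonneg; auto simp: indicator_def),
          subst ennreal_plus, auto simp: indicator_def intro!: sum_nonneg)
    also have "ennreal (\<Sum>l<n. a ^ l / fact l * (g l x * indicator {\<tau>b..} x))
       = (\<Sum>l<n. ennreal (a ^ l / fact l) * (ennreal (g l x) * indicator {\<tau>b..} x))"
    proof -
      have "(\<Sum>l<n. ennreal (a ^ l / fact l) * (ennreal (g l x) * indicator {\<tau>b..} x))
          = (\<Sum>l<n. ennreal (a ^ l / fact l * (g l x * indicator {\<tau>b..} x)))"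
      proof (intro sum.cong refl)
        fix l show "ennreal (a ^ l / fact l) * (ennreal (g l x) * indicator {\<tau>b..} x)
          = ennreal (a ^ l / fact l * (g l x * indicator {\<tau>b..} x))"
          using a0 g0[of l] by (cases "x \<in> {\<tau>b..}") (auto simp: ennreal_mult[symmetric] simp del: ennreal_mult_divide_eq)
      qed
      also have "\<dots> = ennreal (\<Sum>l<n. a ^ l / fact l * (g l x * indicator {\<tau>b..} x))"
        using a0 g0 by (intro sum_ennreal) (auto simp: indicator_def)
      finally show ?thesis by simp
    qed
    finally show "ennreal (r x) = ennreal (exp (- (real n * \<tau>))) *
      (ennreal (exp (- x)) * indicator {ep / P0..\<tau>b} x
      + (\<Sum>l<n. ennreal (a ^ l / fact l) * (ennreal (g l x) * indicator {\<tau>b..} x)))"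
      by (simp add: indicator_def)
  qed
  also have "\<dots> = ennreal (exp (- (real n * \<tau>))) *
      ((\<integral>\<^sup>+x. ennreal (exp (- x)) * indicator {ep / P0..\<tau>b} x \<partial>lborel)
      + (\<Sum>l<n. ennreal (a ^ l / fact l) * (\<integral>\<^sup>+x. ennreal (g l x) * indicator {\<tau>b..} x \<partial>lborel)))"
    by (simp add: g_def nn_integral_cmult nn_integral_add nn_integral_sum)
  also have "(\<integral>\<^sup>+x. ennreal (exp (- x)) * indicator {ep / P0..\<tau>b} x \<partial>lborel) = ennreal (exp (- (ep / P0)) - exp (- \<tau>b))"
    by (subst nn_integral_FTC_Icc[where F="\<lambda>x. - exp (- x)"]) (use tb1 in \<open>auto intro!: derivative_eq_intros\<close>)
  also have "(\<lambda>l. (\<integral>\<^sup>+x. ennreal (g l x) * indicator {\<tau>b..} x \<partial>lborel))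
     = (\<lambda>l. ennreal (exp (- \<tau>n) * (exp (- (1 + a) * (\<tau>b - \<tau>n)) * Sg (1 + a) l (\<tau>b - \<tau>n))))"
    unfolding g_def using a0 tb1 by (intro ext shift_piece) auto
  also have "ennreal (exp (- (real n * \<tau>))) * (ennreal (exp (- (ep / P0)) - exp (- \<tau>b)) +
      (\<Sum>l<n. ennreal (a ^ l / fact l) * ennreal (exp (- \<tau>n) * (exp (- (1 + a) * (\<tau>b - \<tau>n)) * Sg (1 + a) l (\<tau>b - \<tau>n)))))
    = ennreal (exp (- (real n * \<tau>)) * ((exp (- (ep / P0)) - exp (- \<tau>b))
       + (\<Sum>l<n. a ^ l / fact l * (exp (- \<tau>n) * (exp (- (1 + a) * (\<tau>b - \<tau>n)) * Sg (1 + a) l (\<tau>b - \<tau>n))))))"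
  proof -
    have Q: "0 \<le> a ^ l / fact l * (exp (- \<tau>n) * (exp (- (1 + a) * (\<tau>b - \<tau>n)) * Sg (1 + a) l (\<tau>b - \<tau>n)))" for l
      using a0 tb1 by (intro mult_nonneg_nonneg Sg_nonneg) auto
    have D: "0 \<le> exp (- (ep / P0)) - exp (- \<tau>b)" using tb1 by simp
    have "(\<Sum>l<n. ennreal (a ^ l / fact l) * ennreal (exp (- \<tau>n) * (exp (- (1 + a) * (\<tau>b - \<tau>n)) * Sg (1 + a) l (\<tau>b - \<tau>n))))
      = (\<Sum>l<n. ennreal (a ^ l / fact l * (exp (- \<tau>n) * (exp (- (1 + a) * (\<tau>b - \<tau>n)) * Sg (1 + a) l (\<tau>b - \<tau>n)))))"
      by (intro sum.cong refl ennreal_mult[symmetric]) (use a0 tb1 in \<open>auto intro!: mult_nonneg_nonneg Sg_nonneg\<close>)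
    also have "\<dots> = ennreal (\<Sum>l<n. a ^ l / fact l * (exp (- \<tau>n) * (exp (- (1 + a) * (\<tau>b - \<tau>n)) * Sg (1 + a) l (\<tau>b - \<tau>n))))"
      using Q by (intro sum_ennreal) auto
    finally show ?thesis
      using Q D by (simp add: ennreal_mult[symmetric] sum_nonneg ennreal_plus[symmetric] del: ennreal_plus)
  qed
  finally show ?thesis .
qed

definition BrS :: "real \<Rightarrow> real \<Rightarrow> real \<Rightarrow> real \<Rightarrow> real \<Rightarrow> nat \<Rightarrow> real" where
  "BrS \<tau> P0 Pbar es ep n = (let a = es * P0 / Pbar; \<tau>n = (real n * \<tau> * Pbar / es - 1) / P0;
      \<tau>b = max \<tau>n (ep / P0) in (exp (- (ep / P0)) - exp (- \<tau>b))
       + (\<Sum>l<n. a ^ l / fact l * (exp (- \<tau>n) * (exp (- (1 + a) * (\<tau>b - \<tau>n)) * Sg (1 + a) l (\<tau>b - \<tau>n)))))"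

lemma CL2':
  fixes \<tau> P0 Pbar es ep :: real and n :: nat
  assumes "\<tau> > 0" "P0 > 0" "Pbar > 0" "es > 0" "ep > 0"
  shows "(\<integral>\<^sup>+x. ennreal (exponential_density 1 x) *
            ennreal (if ep / P0 < x then Fn \<tau> n (es * (1 + x * P0) / Pbar) else 0) \<partial>lborel)
   = ennreal (exp (- (real n * \<tau>)) * BrS \<tau> P0 Pbar es ep n)"
  unfolding BrS_def Let_def by (rule CL2[OF assms refl refl refl])

lemma BrS_nonneg:
  assumes "P0 > 0" "Pbar > 0" "es > 0"
  shows "BrS \<tau> P0 Pbar es ep n \<ge> 0"
  unfolding BrS_def Let_def using assms
  by (intro add_nonneg_nonneg sum_nonneg mult_nonneg_nonneg Sg_nonneg) (auto intro: add_pos_pos)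

lemma upper_Gamma_closed:
  assumes w: "w \<ge> 0"
  shows "upper_Gamma (real l + 1) w = exp (- w) * Sg 1 l w"
proof -
  have "upper_Gamma (real l + 1) w = (\<integral>t. indicator {w<..} t * (t powr real l * exp (- t)) \<partial>lborel)"
    unfolding upper_Gamma_def set_lebesgue_integral_def by simp
  also have "\<dots> = enn2real (\<integral>\<^sup>+t. ennreal (indicator {w<..} t * (t powr real l * exp (- t))) \<partial>lborel)"
    by (rule integral_eq_nn_integral) auto
  also have "(\<integral>\<^sup>+t. ennreal (indicator {w<..} t * (t powr real l * exp (- t))) \<partial>lborel)
      = (\<integral>\<^sup>+t. ennreal (exp (- 1 * t) * t ^ l) * indicator {w..} t \<partial>lborel)"
  proof (rule nn_integral_cong_AE)
    show "AE t in lborel. ennreal (indicator {w<..} t * (t powr real l * exp (- t)))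
        = ennreal (exp (- 1 * t) * t ^ l) * indicator {w..} t"
      using AE_lborel_singleton[of w]
    proof eventually_elim
      case (elim t)
      show ?case
      proof (cases "w < t")
        case True
        then have "t > 0" using w by simp
        then show ?thesis using True by (simp add: powr_realpow mult_ac)
      next
        case False
        then show ?thesis using elim by (auto simp: indicator_def)
      qed
    qed
  qed
  also have "\<dots> = ennreal (exp (- 1 * w) * Sg 1 l w)"
    by (rule GL) (use w in auto)
  finally show ?thesis using Sg_nonneg[of 1 w l] w by simp
qed


lemma BrS_eq:
  fixes \<tau> P0 Pbar es ep :: real and n :: nat
  assumes n: "n \<ge> 1" and P0: "P0 > 0" and Pb: "Pbar > 0" and es: "es > 0"
  shows "BrS \<tau> P0 Pbar es ep n = (let \<tau>n = (real n * \<tau> * Pbar / es - 1) / P0;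
            \<tau>bn = max \<tau>n (ep / P0);
            c = 1 + es * P0 / Pbar
        in (\<Sum>l = 1..n - 1. es ^ l * Pbar powr (- real l) * P0 ^ l / fact l * exp (- \<tau>n)
                * upper_Gamma (real l + 1) ((\<tau>bn - \<tau>n) * c) / c ^ (l + 1))
            + exp (- ep / P0) - exp (- \<tau>bn)
            + exp (- \<tau>n - (\<tau>bn - \<tau>n) * c) / c)"
proof -
  define a where "a = es * P0 / Pbar"
  define \<tau>n where "\<tau>n = (real n * \<tau> * Pbar / es - 1) / P0"
  define \<tau>b where "\<tau>b = max \<tau>n (ep / P0)"
  define c where "c = 1 + a"
  define d where "d = \<tau>b - \<tau>n"
  have a0: "a > 0" using P0 Pb es by (simp add: a_def)
  have c0: "c > 0" using a0 by (simp add: c_def)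
  have d0: "d \<ge> 0" by (simp add: d_def \<tau>b_def)
  obtain m where m: "n = Suc m" using n by (cases n) auto
  have trm: "a ^ l / fact l * (exp (- \<tau>n) * (exp (- c * d) * Sg c l d))
     = es ^ l * Pbar powr (- real l) * P0 ^ l / fact l * exp (- \<tau>n) * upper_Gamma (real l + 1) (d * c) / c ^ (l + 1)" for l
  proof -
    have "upper_Gamma (real l + 1) (d * c) = exp (- (d * c)) * Sg 1 l (c * d)"
      using upper_Gamma_closed[of "d * c" l] d0 c0 by (simp add: mult.commute)
    moreover have "Sg c l d = Sg 1 l (c * d) / c ^ (l + 1)" by (rule Sg_scale[OF c0])
    moreover have "Pbar powr (- real l) = 1 / Pbar ^ l"
      using Pb by (simp add: powr_minus powr_realpow divide_inverse)
    moreover have "a ^ l = es ^ l * P0 ^ l / Pbar ^ l"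
      by (simp add: a_def power_divide power_mult_distrib)
    moreover have "exp (- c * d) = exp (- (d * c))" by (simp add: mult.commute)
    ultimately show ?thesis
      by (simp add: power_mult_distrib)
  qed
  have "BrS \<tau> P0 Pbar es ep n = (exp (- (ep / P0)) - exp (- \<tau>b))
       + (\<Sum>l<n. a ^ l / fact l * (exp (- \<tau>n) * (exp (- c * d) * Sg c l d)))"
    unfolding BrS_def Let_def a_def \<tau>n_def \<tau>b_def c_def d_def by simp
  also have "(\<Sum>l<n. a ^ l / fact l * (exp (- \<tau>n) * (exp (- c * d) * Sg c l d)))
      = exp (- \<tau>n) * (exp (- c * d) * (1 / c)) + (\<Sum>l<m. a ^ Suc l / fact (Suc l) * (exp (- \<tau>n) * (exp (- c * d) * Sg c (Suc l) d)))"
    unfolding m by (subst sum.lessThan_Suc_shift) simp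
  also have "(\<Sum>l<m. a ^ Suc l / fact (Suc l) * (exp (- \<tau>n) * (exp (- c * d) * Sg c (Suc l) d)))
      = (\<Sum>l = 1..n - 1. es ^ l * Pbar powr (- real l) * P0 ^ l / fact l * exp (- \<tau>n) * upper_Gamma (real l + 1) (d * c) / c ^ (l + 1))"
    unfolding trm m by (simp add: sum.atLeast1_atMost_eq del: of_nat_Suc)
  also have "exp (- \<tau>n) * (exp (- c * d) * (1 / c)) = exp (- \<tau>n - d * c) / c"
  proof -
    have "exp (- \<tau>n - d * c) = exp (- \<tau>n) * exp (- c * d)"
      by (simp add: exp_add[symmetric] algebra_simps)
    then show ?thesis by simp
  qed
  finally have eq: "BrS \<tau> P0 Pbar es ep n = exp (- (ep / P0)) - exp (- \<tau>b) +
    (exp (- \<tau>n - d * c) / c +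
     (\<Sum>l = 1..n - 1. es ^ l * Pbar powr - real l * P0 ^ l / fact l * exp (- \<tau>n) * upper_Gamma (real l + 1) (d * c) / c ^ (l + 1)))" .
  show ?thesis
    unfolding Let_def a_def[symmetric] \<tau>n_def[symmetric] \<tau>b_def[symmetric] c_def[symmetric] d_def[symmetric]
    using eq unfolding minus_divide_left by linarith
qed

lemma drop_sorted_filter:
  fixes ys :: "real list"
  assumes "sorted ys"
  shows "drop (length ys - length (filter (\<lambda>x. \<tau> < x) ys)) ys = filter (\<lambda>x. \<tau> < x) ys"
  using assms
proof (induction ys)
  case Nil
  then show ?case by simp
next
  case (Cons y ys)
  show ?case
  proof (cases "\<tau> < y")
    case True
    then have "\<forall>x\<in>set ys. \<tau> < x" using Cons.prems by auto
    then show ?thesis using True by simp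
  next
    case False
    have "length (filter (\<lambda>x. \<tau> < x) ys) \<le> length ys" by simp
    then have "length (y # ys) - length (filter (\<lambda>x. \<tau> < x) (y # ys)) = Suc (length ys - length (filter (\<lambda>x. \<tau> < x) ys))"
      using False by (simp add: Suc_diff_le)
    then show ?thesis using False Cons by simp
  qed
qed

lemma sum_nth_drop:
  fixes ys :: "real list"
  assumes "a \<le> length ys"
  shows "(\<Sum>j = a + 1..length ys. ys ! (j - 1)) = sum_list (drop a ys)"
proof -
  have "sum_list (drop a ys) = (\<Sum>i<length ys - a. drop a ys ! i)"
    by (simp add: sum_list_sum_nth atLeast0LessThan)
  also have "\<dots> = (\<Sum>i<length ys - a. ys ! (a + i))"
    using assms by (intro sum.cong refl) auto
  also have "\<dots> = (\<Sum>j = a + 1..length ys. ys ! (j - 1))"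
  proof (rule sum.reindex_bij_witness[where i="\<lambda>j. j - 1 - a" and j="\<lambda>i. i + a + 1"])
  qed (use assms in \<open>auto simp: add.commute\<close>)
  finally show ?thesis by simp
qed

lemma top_sum:
  fixes g :: "nat \<Rightarrow> real"
  shows "(\<Sum>j = K - card {m \<in> {1..K}. \<tau> < g m} + 1..K. sort (map g [1..<K+1]) ! (j - 1))
       = (\<Sum>m\<in>{m \<in> {1..K}. \<tau> < g m}. g m)"
proof -
  define xs where "xs = map g [1..<K+1]"
  define ys where "ys = sort xs"
  define P where "P = (\<lambda>x::real. \<tau> < x)"
  have ly: "length ys = K" by (simp add: ys_def xs_def)
  have mset_eq: "mset (filter P ys) = mset (filter P xs)" by (simp add: ys_def)
  have setf: "set (filter (\<lambda>m. \<tau> < g m) [1..<K+1]) = {m \<in> {1..K}. \<tau> < g m}" by auto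
  have lf: "length (filter P ys) = card {m \<in> {1..K}. \<tau> < g m}"
  proof -
    have "length (filter P ys) = length (filter P xs)" using mset_eq by (metis size_mset)
    also have "\<dots> = length (filter (\<lambda>m. \<tau> < g m) [1..<K+1])"
      by (simp add: xs_def P_def filter_map comp_def)
    also have "\<dots> = card {m \<in> {1..K}. \<tau> < g m}"
      using setf distinct_card[of "filter (\<lambda>m. \<tau> < g m) [1..<K+1]"] by simp
    finally show ?thesis .
  qed
  have "(\<Sum>j = K - card {m \<in> {1..K}. \<tau> < g m} + 1..K. ys ! (j - 1)) = sum_list (drop (K - card {m \<in> {1..K}. \<tau> < g m}) ys)"
    using sum_nth_drop[of "K - card {m \<in> {1..K}. \<tau> < g m}" ys] ly by simp
  also have "drop (K - card {m \<in> {1..K}. \<tau> < g m}) ys = filter P ys"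
    using drop_sorted_filter[of ys \<tau>] ly lf by (simp add: ys_def P_def)
  also have "sum_list (filter P ys) = sum_list (filter P xs)"
    using mset_eq by (metis sum_mset_sum_list)
  also have "\<dots> = sum_list (map g (filter (\<lambda>m. \<tau> < g m) [1..<K+1]))"
    by (simp add: xs_def P_def filter_map comp_def)
  also have "\<dots> = (\<Sum>m\<in>{m \<in> {1..K}. \<tau> < g m}. g m)"
    using setf by (simp add: sum_list_distinct_conv_sum_set)
  finally show ?thesis by (simp add: ys_def xs_def)
qed

lemma log_conds:
  fixes x P0 Pbar S R0 r :: real
  assumes "x \<ge> 0" "P0 > 0" "Pbar > 0" "S > 0"
  shows "(R0 < log 2 (1 + x * P0) \<and> r < log 2 (1 + Pbar * S / (1 + x * P0)))
     \<longleftrightarrow> ((2 powr R0 - 1) / P0 < x \<and> (2 powr r - 1) * (1 + x * P0) / Pbar < S)"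
proof -
  have p: "1 + x * P0 > 0" using assms by (simp add: add_pos_nonneg)
  have q: "1 + Pbar * S / (1 + x * P0) > 0" using assms p by (simp add: add_pos_nonneg)
  have "R0 < log 2 (1 + x * P0) \<longleftrightarrow> 2 powr R0 < 1 + x * P0" by (rule less_log_iff) (use p in auto)
  also have "\<dots> \<longleftrightarrow> (2 powr R0 - 1) / P0 < x" using assms by (simp add: field_simps)
  finally have 1: "R0 < log 2 (1 + x * P0) \<longleftrightarrow> (2 powr R0 - 1) / P0 < x" .
  have "r < log 2 (1 + Pbar * S / (1 + x * P0)) \<longleftrightarrow> 2 powr r < 1 + Pbar * S / (1 + x * P0)"
    by (rule less_log_iff) (use q in auto)
  also have "\<dots> \<longleftrightarrow> (2 powr r - 1) * (1 + x * P0) / Pbar < S" using assms p by (simp add: field_simps)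
  finally show ?thesis using 1 by blast
qed

context prob_space
begin

lemma P_le:
  fixes h :: "nat \<Rightarrow> 'a \<Rightarrow> real"
  assumes ind: "indep_vars (\<lambda>_. borel) h {0..K}"
    and dist: "\<And>m. m \<le> K \<Longrightarrow> distributed M lborel (h m) (exponential_density 1)"
    and tau: "\<tau> > 0"
    and C: "C \<subseteq> {0..K}"
  shows "prob {\<omega> \<in> space M. \<forall>m\<in>C. h m \<omega> \<le> \<tau>} = (1 - exp (- \<tau>)) ^ card C"
proof (cases "C = {}")
  case True
  then show ?thesis by (simp add: prob_space)
next
  case False
  have fin: "finite C" using C finite_subset by blast
  have "{\<omega> \<in> space M. \<forall>m\<in>C. h m \<omega> \<le> \<tau>} = (\<Inter>m\<in>C. h m -` {..\<tau>} \<inter> space M)"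
    using False by auto
  also have "prob \<dots> = (\<Prod>m\<in>C. prob (h m -` {..\<tau>} \<inter> space M))"
    by (rule indep_varsD[OF ind False fin C]) auto
  also have "\<dots> = (\<Prod>m\<in>C. 1 - exp (- \<tau>))"
  proof (intro prod.cong refl)
    fix m assume "m \<in> C"
    then have "distributed M lborel (h m) (exponential_density 1)" using dist C by auto
    from exponential_distributedD_le[OF this, of \<tau>] tau
    have "\<P>(x in M. h m x \<le> \<tau>) = 1 - exp (- \<tau>)" by simp
    moreover have "h m -` {..\<tau>} \<inter> space M = {x \<in> space M. h m x \<le> \<tau>}" by auto
    ultimately show "prob (h m -` {..\<tau>} \<inter> space M) = 1 - exp (- \<tau>)" by simp
  qed
  finally show ?thesis by simp
qed

lemma rv_h:
  fixes h :: "nat \<Rightarrow> 'a \<Rightarrow> real"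
  assumes dist: "\<And>m. m \<le> K \<Longrightarrow> distributed M lborel (h m) (exponential_density 1)"
    and "m \<le> K"
  shows "h m \<in> borel_measurable M"
  using distributed_measurable[OF dist[OF assms(2)]] by simp

lemma distr_h:
  fixes h :: "nat \<Rightarrow> 'a \<Rightarrow> real"
  assumes dist: "\<And>m. m \<le> K \<Longrightarrow> distributed M lborel (h m) (exponential_density 1)"
    and "m \<le> K"
  shows "distr M borel (h m) = density lborel (exponential_density 1)"
proof -
  have "distr M borel (h m) = distr M lborel (h m)" by (rule distr_cong) auto
  then show ?thesis using distributed_distr_eq_density[OF dist[OF assms(2)]] by simp
qed

lemma TL:
  fixes h :: "nat \<Rightarrow> 'a \<Rightarrow> real"
  assumes ind: "indep_vars (\<lambda>_. borel) h {0..K}"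
    and dist: "\<And>m. m \<le> K \<Longrightarrow> distributed M lborel (h m) (exponential_density 1)"
    and tau: "\<tau> > 0"
    and T: "T \<subseteq> {0..K}"
  shows "prob {\<omega> \<in> space M. (\<forall>m\<in>T. \<tau> < h m \<omega>) \<and> s < (\<Sum>m\<in>T. h m \<omega>)} = Fn \<tau> (card T) s"
proof -
  have "finite T" using T finite_subset by blast
  then show ?thesis using T
  proof (induction T arbitrary: s rule: finite_induct)
    case empty
    show ?case by (cases "s < 0") (auto simp: Fn_def prob_space)
  next
    case (insert k T)
    have k: "k \<le> K" "k \<notin> T" and TK: "T \<subseteq> {0..K}" using insert by auto
    let ?V = "\<lambda>\<omega>. restrict (\<lambda>i. h i \<omega>) T"
    let ?U = "\<lambda>\<omega>. restrict (\<lambda>i. h i \<omega>) {k}"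
    let ?N = "PiM T (\<lambda>_. borel) :: (nat \<Rightarrow> real) measure"
    let ?N1 = "PiM {k} (\<lambda>_. borel) :: (nat \<Rightarrow> real) measure"
    have iv: "indep_var ?N1 ?U ?N ?V"
      using k TK by (intro indep_var_restrict[OF ind]) auto
    have rvk: "random_variable ?N1 ?U" using indep_var_rv1[OF iv] .
    have rvV: "random_variable ?N ?V" using indep_var_rv2[OF iv] .
    have hk: "h k \<in> borel_measurable M" by (rule rv_h[OF dist k(1)])
    define B where "B = {p \<in> space (?N1 \<Otimes>\<^sub>M ?N). \<tau> < fst p k \<and> (\<forall>m\<in>T. \<tau> < snd p m) \<and> s < fst p k + (\<Sum>m\<in>T. snd p m)}"
    have Bs: "B \<in> sets (?N1 \<Otimes>\<^sub>M ?N)"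
      unfolding B_def using insert(1) by measurable
    have "emeasure M {\<omega> \<in> space M. (\<forall>m\<in>insert k T. \<tau> < h m \<omega>) \<and> s < (\<Sum>m\<in>insert k T. h m \<omega>)}
        = emeasure M ((\<lambda>\<omega>. (?U \<omega>, ?V \<omega>)) -` B \<inter> space M)"
      using insert(1,2) rvk rvV
      by (intro arg_cong[where f="emeasure M"])
         (auto simp: B_def space_pair_measure measurable_space[OF rvk] measurable_space[OF rvV])
    also have "\<dots> = emeasure (distr M (?N1 \<Otimes>\<^sub>M ?N) (\<lambda>\<omega>. (?U \<omega>, ?V \<omega>))) B"
      using Bs rvk rvV by (subst emeasure_distr) (auto intro!: measurable_Pair)
    also have "distr M (?N1 \<Otimes>\<^sub>M ?N) (\<lambda>\<omega>. (?U \<omega>, ?V \<omega>)) = distr M ?N1 ?U \<Otimes>\<^sub>M distr M ?N ?V"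
      using iv by (simp add: indep_var_distribution_eq)
    also have "emeasure (distr M ?N1 ?U \<Otimes>\<^sub>M distr M ?N ?V) B
        = (\<integral>\<^sup>+y. emeasure (distr M ?N ?V) (Pair y -` B) \<partial>distr M ?N1 ?U)"
    proof -
      interpret D: prob_space "distr M ?N ?V" by (rule prob_space_distr[OF rvV])
      show ?thesis using Bs by (subst D.emeasure_pair_measure_alt) auto
    qed
    also have "\<dots> = (\<integral>\<^sup>+y. (if \<tau> < y k then ennreal (Fn \<tau> (card T) (s - y k)) else 0) \<partial>distr M ?N1 ?U)"
    proof (intro nn_integral_cong)
      fix y assume "y \<in> space (distr M ?N1 ?U)"
      have "emeasure (distr M ?N ?V) (Pair y -` B) = emeasure M (?V -` (Pair y -` B) \<inter> space M)"
        using Bs rvV by (subst emeasure_distr) (auto intro!: sets_Pair1[OF Bs])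
      also have "?V -` (Pair y -` B) \<inter> space M
         = (if \<tau> < y k then {\<omega> \<in> space M. (\<forall>m\<in>T. \<tau> < h m \<omega>) \<and> s - y k < (\<Sum>m\<in>T. h m \<omega>)} else {})"
        using rvV \<open>y \<in> space (distr M ?N1 ?U)\<close>
        by (auto simp: B_def space_pair_measure measurable_space[OF rvV] algebra_simps)
      also have "emeasure M \<dots> = (if \<tau> < y k then ennreal (Fn \<tau> (card T) (s - y k)) else 0)"
        using insert(3)[OF TK, of "s - y k"] by (simp add: emeasure_eq_measure)
      finally show "emeasure (distr M ?N ?V) (Pair y -` B) = (if \<tau> < y k then ennreal (Fn \<tau> (card T) (s - y k)) else 0)" .
    qed
    also have "\<dots> = (\<integral>\<^sup>+\<omega>. (if \<tau> < h k \<omega> then ennreal (Fn \<tau> (card T) (s - h k \<omega>)) else 0) \<partial>M)"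
      using rvk hk by (subst nn_integral_distr) (auto intro!: nn_integral_cong)
    also have "\<dots> = (\<integral>\<^sup>+y. (if \<tau> < y then ennreal (Fn \<tau> (card T) (s - y)) else 0) \<partial>distr M borel (h k))"
      using hk by (subst nn_integral_distr) auto
    also have "\<dots> = (\<integral>\<^sup>+y. ennreal (exponential_density 1 y) * ennreal (if \<tau> < y then Fn \<tau> (card T) (s - y) else 0) \<partial>lborel)"
    proof -
      have dh: "distr M borel (h k) = density lborel (\<lambda>x. ennreal (exponential_density 1 x))"
        by (rule distr_h) (use dist k in auto)
      show ?thesis unfolding dh
        by (subst nn_integral_density) (auto intro!: nn_integral_cong)
    qed
    also have "\<dots> = ennreal (Fn \<tau> (card (insert k T)) s)"
      using CL1[OF tau] insert(1,2) by simp
    finally show ?case by (simp add: measure_def Fn_nonneg)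
  qed
qed

lemma BT:
  fixes h :: "nat \<Rightarrow> 'a \<Rightarrow> real"
  assumes ind: "indep_vars (\<lambda>_. borel) h {0..K}"
    and dist: "\<And>m. m \<le> K \<Longrightarrow> distributed M lborel (h m) (exponential_density 1)"
    and tau: "\<tau> > 0" and P0: "P0 > 0" and Pb: "Pbar > 0" and R0: "R0 > 0" and Ri: "Ri > 0"
    and T: "T \<subseteq> {1..K}" "T \<noteq> {}"
  shows "prob {\<omega> \<in> space M. R0 < log 2 (1 + h 0 \<omega> * P0)
      \<and> real (card T) * Ri < log 2 (1 + Pbar * (\<Sum>m\<in>T. h m \<omega>) / (1 + h 0 \<omega> * P0))
      \<and> (\<forall>m\<in>T. \<tau> < h m \<omega>)}
    = exp (- (real (card T) * \<tau>)) * BrS \<tau> P0 Pbar (2 powr (real (card T) * Ri) - 1) (2 powr R0 - 1) (card T)"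
proof -
  have fin: "finite T" using T finite_subset by blast
  have TK: "T \<subseteq> {0..K}" using T by auto
  define n where "n = card T"
  have n1: "n \<ge> 1" using fin T by (simp add: n_def Suc_le_eq card_gt_0_iff)
  define es where "es = 2 powr (real n * Ri) - 1"
  define ep where "ep = 2 powr R0 - 1"
  have es0: "es > 0" using n1 Ri by (simp add: es_def)
  have ep0: "ep > 0" using R0 by (simp add: ep_def)
  let ?V = "\<lambda>\<omega>. restrict (\<lambda>i. h i \<omega>) T"
  let ?U = "\<lambda>\<omega>. restrict (\<lambda>i. h i \<omega>) {0}"
  let ?N = "PiM T (\<lambda>_. borel) :: (nat \<Rightarrow> real) measure"
  let ?N1 = "PiM {0} (\<lambda>_. borel) :: (nat \<Rightarrow> real) measure"
  have iv: "indep_var ?N1 ?U ?N ?V"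
    using T by (intro indep_var_restrict[OF ind]) auto
  have rvk: "random_variable ?N1 ?U" using indep_var_rv1[OF iv] .
  have rvV: "random_variable ?N ?V" using indep_var_rv2[OF iv] .
  have h0: "h 0 \<in> borel_measurable M" by (rule rv_h) (use dist in auto)
  interpret D: prob_space "distr M ?N ?V" by (rule prob_space_distr[OF rvV])
  define B where "B = {p \<in> space (?N1 \<Otimes>\<^sub>M ?N). R0 < log 2 (1 + fst p 0 * P0)
      \<and> real n * Ri < log 2 (1 + Pbar * (\<Sum>m\<in>T. snd p m) / (1 + fst p 0 * P0))
      \<and> (\<forall>m\<in>T. \<tau> < snd p m)}"
  have Bs: "B \<in> sets (?N1 \<Otimes>\<^sub>M ?N)"
    unfolding B_def using fin by measurable
  define E where "E y = emeasure (distr M ?N ?V) (Pair y -` B)" for y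
  have Em: "E \<in> borel_measurable ?N1"
  proof -
    have "sets (?N1 \<Otimes>\<^sub>M distr M ?N ?V) = sets (?N1 \<Otimes>\<^sub>M ?N)"
      by (intro sets_pair_measure_cong) auto
    then show ?thesis unfolding E_def using Bs by (intro D.measurable_emeasure_Pair) simp
  qed
  define \<Phi> where "\<Phi> x = E (\<lambda>i\<in>{0::nat}. x)" for x :: real
  have \<Phi>m: "\<Phi> \<in> borel_measurable borel"
    unfolding \<Phi>_def by (rule measurable_compose[OF _ Em]) (auto intro!: measurable_restrict)
  have "emeasure M {\<omega> \<in> space M. R0 < log 2 (1 + h 0 \<omega> * P0)
      \<and> real (card T) * Ri < log 2 (1 + Pbar * (\<Sum>m\<in>T. h m \<omega>) / (1 + h 0 \<omega> * P0))
      \<and> (\<forall>m\<in>T. \<tau> < h m \<omega>)}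
        = emeasure M ((\<lambda>\<omega>. (?U \<omega>, ?V \<omega>)) -` B \<inter> space M)"
    using rvk rvV
    by (intro arg_cong[where f="emeasure M"])
       (auto simp: B_def n_def space_pair_measure measurable_space[OF rvk] measurable_space[OF rvV])
  also have "\<dots> = emeasure (distr M (?N1 \<Otimes>\<^sub>M ?N) (\<lambda>\<omega>. (?U \<omega>, ?V \<omega>))) B"
    using Bs rvk rvV by (subst emeasure_distr) (auto intro!: measurable_Pair)
  also have "distr M (?N1 \<Otimes>\<^sub>M ?N) (\<lambda>\<omega>. (?U \<omega>, ?V \<omega>)) = distr M ?N1 ?U \<Otimes>\<^sub>M distr M ?N ?V"
    using iv by (simp add: indep_var_distribution_eq)
  also have "emeasure (distr M ?N1 ?U \<Otimes>\<^sub>M distr M ?N ?V) B = (\<integral>\<^sup>+y. E y \<partial>distr M ?N1 ?U)"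
    unfolding E_def using Bs by (subst D.emeasure_pair_measure_alt) auto
  also have "\<dots> = (\<integral>\<^sup>+\<omega>. E (?U \<omega>) \<partial>M)"
    using rvk Em by (subst nn_integral_distr) auto
  also have "\<dots> = (\<integral>\<^sup>+\<omega>. \<Phi> (h 0 \<omega>) \<partial>M)"
    unfolding \<Phi>_def by (intro nn_integral_cong arg_cong[where f=E]) (auto simp: restrict_def fun_eq_iff)
  also have "\<dots> = (\<integral>\<^sup>+x. \<Phi> x \<partial>distr M borel (h 0))"
    using h0 \<Phi>m by (subst nn_integral_distr) auto
  also have "\<dots> = (\<integral>\<^sup>+x. ennreal (exponential_density 1 x) * \<Phi> x \<partial>lborel)"
  proof -
    have dh: "distr M borel (h 0) = density lborel (\<lambda>x. ennreal (exponential_density 1 x))"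
      by (rule distr_h) (use dist in auto)
    show ?thesis unfolding dh using \<Phi>m by (subst nn_integral_density) auto
  qed
  also have "\<dots> = (\<integral>\<^sup>+x. ennreal (exponential_density 1 x) *
            ennreal (if ep / P0 < x then Fn \<tau> n (es * (1 + x * P0) / Pbar) else 0) \<partial>lborel)"
  proof (intro nn_integral_cong)
    fix x :: real
    show "ennreal (exponential_density 1 x) * \<Phi> x = ennreal (exponential_density 1 x) *
            ennreal (if ep / P0 < x then Fn \<tau> n (es * (1 + x * P0) / Pbar) else 0)"
    proof (cases "x < 0")
      case True
      then show ?thesis by (simp add: exponential_density_def)
    next
      case False
      then have x0: "x \<ge> 0" by simp
      have "\<Phi> x = emeasure M (?V -` (Pair (\<lambda>i\<in>{0::nat}. x) -` B) \<inter> space M)"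
        unfolding \<Phi>_def E_def using Bs rvV by (subst emeasure_distr) (auto intro!: sets_Pair1[OF Bs])
      also have "?V -` (Pair (\<lambda>i\<in>{0::nat}. x) -` B) \<inter> space M
         = (if ep / P0 < x then {\<omega> \<in> space M. (\<forall>m\<in>T. \<tau> < h m \<omega>) \<and> es * (1 + x * P0) / Pbar < (\<Sum>m\<in>T. h m \<omega>)} else {})"
      proof -
        have "(R0 < log 2 (1 + x * P0) \<and> real n * Ri < log 2 (1 + Pbar * (\<Sum>m\<in>T. h m \<omega>) / (1 + x * P0)))
          \<longleftrightarrow> (ep / P0 < x \<and> es * (1 + x * P0) / Pbar < (\<Sum>m\<in>T. h m \<omega>))"
          if "\<forall>m\<in>T. \<tau> < h m \<omega>" for \<omega>
        proof -
          have "(\<Sum>m\<in>T. h m \<omega>) > 0"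
            using that tau fin T(2) by (intro sum_pos) auto
          then show ?thesis unfolding ep_def es_def by (intro log_conds x0 P0 Pb)
        qed
        then show ?thesis
          using rvV by (auto simp: B_def space_pair_measure measurable_space[OF rvV] space_PiM)
      qed
      also have "emeasure M \<dots> = ennreal (if ep / P0 < x then Fn \<tau> n (es * (1 + x * P0) / Pbar) else 0)"
        using TL[OF ind dist tau TK, of "es * (1 + x * P0) / Pbar"]
        by (auto simp: emeasure_eq_measure n_def Fn_nonneg)
      finally show ?thesis by simp
    qed
  qed
  also have "\<dots> = ennreal (exp (- (real n * \<tau>)) * BrS \<tau> P0 Pbar es ep n)"
    by (rule CL2'[OF tau P0 Pb es0 ep0])
  finally have "emeasure M {\<omega> \<in> space M. R0 < log 2 (1 + h 0 \<omega> * P0)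
      \<and> real (card T) * Ri < log 2 (1 + Pbar * (\<Sum>m\<in>T. h m \<omega>) / (1 + h 0 \<omega> * P0))
      \<and> (\<forall>m\<in>T. \<tau> < h m \<omega>)} = ennreal (exp (- (real n * \<tau>)) * BrS \<tau> P0 Pbar es ep n)" .
  moreover have "BrS \<tau> P0 Pbar es ep n \<ge> 0" using P0 Pb es0 by (rule BrS_nonneg)
  ultimately show ?thesis
    unfolding n_def es_def ep_def by (simp add: measure_def)
qed

lemma ET:
  fixes h :: "nat \<Rightarrow> 'a \<Rightarrow> real"
  assumes ind: "indep_vars (\<lambda>_. borel) h {0..K}"
    and dist: "\<And>m. m \<le> K \<Longrightarrow> distributed M lborel (h m) (exponential_density 1)"
    and tau: "\<tau> > 0" and P0: "P0 > 0" and Pb: "Pbar > 0" and R0: "R0 > 0" and Ri: "Ri > 0"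
    and T: "T \<subseteq> {1..K}" "T \<noteq> {}"
  shows "prob {\<omega> \<in> space M. (\<forall>m\<in>{1..K} - T. h m \<omega> \<le> \<tau>) \<and> R0 < log 2 (1 + h 0 \<omega> * P0)
      \<and> real (card T) * Ri < log 2 (1 + Pbar * (\<Sum>m\<in>T. h m \<omega>) / (1 + h 0 \<omega> * P0))
      \<and> (\<forall>m\<in>T. \<tau> < h m \<omega>)}
    = (1 - exp (- \<tau>)) ^ (K - card T) *
      (exp (- (real (card T) * \<tau>)) * BrS \<tau> P0 Pbar (2 powr (real (card T) * Ri) - 1) (2 powr R0 - 1) (card T))"
proof -
  define C where "C = {1..K} - T"
  define A where "A = insert 0 T"
  have fin: "finite T" using T finite_subset by blast
  have finC: "finite C" by (simp add: C_def)
  have finA: "finite A" using fin by (simp add: A_def)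
  let ?VC = "\<lambda>\<omega>. restrict (\<lambda>i. h i \<omega>) C"
  let ?VA = "\<lambda>\<omega>. restrict (\<lambda>i. h i \<omega>) A"
  let ?NC = "PiM C (\<lambda>_. borel) :: (nat \<Rightarrow> real) measure"
  let ?NA = "PiM A (\<lambda>_. borel) :: (nat \<Rightarrow> real) measure"
  have iv: "indep_var ?NC ?VC ?NA ?VA"
    using T by (intro indep_var_restrict[OF ind]) (auto simp: C_def A_def)
  have rvC: "random_variable ?NC ?VC" using indep_var_rv1[OF iv] .
  have rvA: "random_variable ?NA ?VA" using indep_var_rv2[OF iv] .
  define XC where "XC = {f \<in> space ?NC. \<forall>m\<in>C. f m \<le> \<tau>}"
  define XA where "XA = {f \<in> space ?NA. R0 < log 2 (1 + f 0 * P0)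
      \<and> real (card T) * Ri < log 2 (1 + Pbar * (\<Sum>m\<in>T. f m) / (1 + f 0 * P0))
      \<and> (\<forall>m\<in>T. \<tau> < f m)}"
  have XCs: "XC \<in> sets ?NC" unfolding XC_def using finC by measurable
  have XAs: "XA \<in> sets ?NA" unfolding XA_def using fin by (measurable; simp add: A_def)
  have "{\<omega> \<in> space M. (\<forall>m\<in>{1..K} - T. h m \<omega> \<le> \<tau>) \<and> R0 < log 2 (1 + h 0 \<omega> * P0)
      \<and> real (card T) * Ri < log 2 (1 + Pbar * (\<Sum>m\<in>T. h m \<omega>) / (1 + h 0 \<omega> * P0))
      \<and> (\<forall>m\<in>T. \<tau> < h m \<omega>)} = (\<lambda>\<omega>. (?VC \<omega>, ?VA \<omega>)) -` (XC \<times> XA) \<inter> space M"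
    using measurable_space[OF rvC] measurable_space[OF rvA]
    by (auto simp: XC_def XA_def C_def A_def)
  then have "prob {\<omega> \<in> space M. (\<forall>m\<in>{1..K} - T. h m \<omega> \<le> \<tau>) \<and> R0 < log 2 (1 + h 0 \<omega> * P0)
      \<and> real (card T) * Ri < log 2 (1 + Pbar * (\<Sum>m\<in>T. h m \<omega>) / (1 + h 0 \<omega> * P0))
      \<and> (\<forall>m\<in>T. \<tau> < h m \<omega>)} = prob (?VC -` XC \<inter> space M) * prob (?VA -` XA \<inter> space M)"
    using indep_varD[OF iv XCs XAs] by simp
  also have "?VC -` XC \<inter> space M = {\<omega> \<in> space M. \<forall>m\<in>C. h m \<omega> \<le> \<tau>}"
    using measurable_space[OF rvC] by (auto simp: XC_def)
  also have "prob \<dots> = (1 - exp (- \<tau>)) ^ card C"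
    by (rule P_le[OF ind dist tau]) (auto simp: C_def)
  also have "?VA -` XA \<inter> space M = {\<omega> \<in> space M. R0 < log 2 (1 + h 0 \<omega> * P0)
      \<and> real (card T) * Ri < log 2 (1 + Pbar * (\<Sum>m\<in>T. h m \<omega>) / (1 + h 0 \<omega> * P0))
      \<and> (\<forall>m\<in>T. \<tau> < h m \<omega>)}"
    using measurable_space[OF rvA] by (auto simp: XA_def A_def)
  also have "prob \<dots> = exp (- (real (card T) * \<tau>)) * BrS \<tau> P0 Pbar (2 powr (real (card T) * Ri) - 1) (2 powr R0 - 1) (card T)"
    by (rule BT[OF ind dist tau P0 Pb R0 Ri T])
  also have "card C = K - card T" using T fin by (simp add: C_def card_Diff_subset)
  finally show ?thesis .
qed

end

lemma log_cond1:
  fixes x P0 R0 :: real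
  assumes "x \<ge> 0" "P0 > 0"
  shows "R0 < log 2 (1 + x * P0) \<longleftrightarrow> (2 powr R0 - 1) / P0 < x"
proof -
  have p: "1 + x * P0 > 0" using assms by (simp add: add_pos_nonneg)
  have "R0 < log 2 (1 + x * P0) \<longleftrightarrow> 2 powr R0 < 1 + x * P0" by (rule less_log_iff) (use p in auto)
  also have "\<dots> \<longleftrightarrow> (2 powr R0 - 1) / P0 < x" using assms by (simp add: field_simps)
  finally show ?thesis .
qed

context prob_space
begin

lemma L0:
  fixes h :: "nat \<Rightarrow> 'a \<Rightarrow> real"
  assumes dist: "distributed M lborel (h 0) (exponential_density 1)"
    and P0: "P0 > 0" and R0: "R0 > 0"
  shows "prob {\<omega> \<in> space M. R0 < log 2 (1 + h 0 \<omega> * P0)} = exp (- ((2 powr R0 - 1) / P0))"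
proof -
  define A where "A = {x::real. R0 < log 2 (1 + x * P0)}"
  have As: "A \<in> sets lborel" unfolding A_def by measurable
  have ep: "(2 powr R0 - 1) / P0 > 0" using R0 P0 by simp
  have "emeasure M {\<omega> \<in> space M. R0 < log 2 (1 + h 0 \<omega> * P0)} = emeasure M (h 0 -` A \<inter> space M)"
    by (intro arg_cong[where f="emeasure M"]) (auto simp: A_def)
  also have "\<dots> = (\<integral>\<^sup>+x. ennreal (exponential_density 1 x) * indicator A x \<partial>lborel)"
    by (rule distributed_emeasure[OF dist As])
  also have "\<dots> = (\<integral>\<^sup>+x. ennreal (exp (- x)) * indicator {(2 powr R0 - 1) / P0..} x \<partial>lborel)"
  proof (rule nn_integral_cong_AE)
    show "AE x in lborel. ennreal (exponential_density 1 x) * indicator A x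
        = ennreal (exp (- x)) * indicator {(2 powr R0 - 1) / P0..} x"
      using AE_lborel_singleton[of "(2 powr R0 - 1) / P0"]
    proof eventually_elim
      case (elim x)
      show ?case
      proof (cases "x < 0")
        case True
        then show ?thesis using ep by (simp add: exponential_density_def indicator_def)
      next
        case False
        then have "x \<in> A \<longleftrightarrow> (2 powr R0 - 1) / P0 < x" unfolding A_def using log_cond1[of x P0 R0] P0 by simp
        then show ?thesis using False elim by (auto simp: exponential_density_def indicator_def)
      qed
    qed
  qed
  also have "\<dots> = ennreal (exp (- ((2 powr R0 - 1) / P0)))" by (rule exp_tail)
  finally show ?thesis by (simp add: measure_def)
qed

lemma Sn_part:
  fixes h :: "nat \<Rightarrow> 'a \<Rightarrow> real"
  assumes ind: "indep_vars (\<lambda>_. borel) h {0..K}"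
    and dist: "\<And>m. m \<le> K \<Longrightarrow> distributed M lborel (h m) (exponential_density 1)"
    and tau: "\<tau> > 0" and P0: "P0 > 0" and Pb: "Pbar > 0" and R0: "R0 > 0" and Ri: "Ri > 0"
    and n: "1 \<le> n" "n \<le> K"
  shows "measure M {\<omega> \<in> space M. Nadm h K \<tau> \<omega> = n} * Q3 M h K \<tau> P0 Pbar R0 Ri n
    = real (K choose n) * ((1 - exp (- \<tau>)) ^ (K - n) *
      (exp (- (real n * \<tau>)) * BrS \<tau> P0 Pbar (2 powr (real n * Ri) - 1) (2 powr R0 - 1) n))"
proof -
  define h' where "h' i = (if i \<le> K then h i else (\<lambda>_. 0))" for i
  have h'm[measurable]: "h' i \<in> borel_measurable M" for i
    unfolding h'_def using rv_h[OF dist] by auto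
  have hh': "i \<le> K \<Longrightarrow> h' i = h i" for i by (simp add: h'_def)
  define Tw where "Tw \<omega> = {m \<in> {1..K}. \<tau> < h m \<omega>}" for \<omega>
  define TT where "TT = {T. T \<subseteq> {1..K} \<and> card T = n}"
  have finTT: "finite TT" unfolding TT_def by (rule finite_subset[of _ "Pow {1..K}"]) auto
  have cardTT: "card TT = K choose n" unfolding TT_def using n_subsets[of "{1..K}" n] by simp
  define ES where "ES T = {\<omega> \<in> space M. (\<forall>m\<in>{1..K} - T. h m \<omega> \<le> \<tau>) \<and> R0 < log 2 (1 + h 0 \<omega> * P0)
      \<and> real (card T) * Ri < log 2 (1 + Pbar * (\<Sum>m\<in>T. h m \<omega>) / (1 + h 0 \<omega> * P0))
      \<and> (\<forall>m\<in>T. \<tau> < h m \<omega>)}" for T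
  define DT where "DT T = {\<omega> \<in> space M. \<forall>m\<in>{1..K}. (m \<in> T \<longleftrightarrow> \<tau> < h m \<omega>)}" for T
  define Sn where "Sn = {\<omega> \<in> space M. log 2 (1 + h 0 \<omega> * P0) > R0 \<and>
        log 2 (1 + Pbar * (\<Sum>j = K - n + 1..K. ostat h K j \<omega>) / (1 + h 0 \<omega> * P0)) > real n * Ri \<and>
        Nadm h K \<tau> \<omega> = n}"
  define Nn where "Nn = {\<omega> \<in> space M. Nadm h K \<tau> \<omega> = n}"
  have TwT: "T \<subseteq> {1..K} \<Longrightarrow> ((\<forall>m\<in>{1..K} - T. h m \<omega> \<le> \<tau>) \<and> (\<forall>m\<in>T. \<tau> < h m \<omega>)) \<longleftrightarrow> Tw \<omega> = T" for T \<omega>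
    unfolding Tw_def by (auto simp: not_less) (meson DiffI atLeastAtMost_iff not_le)+
  have Nadm_Tw: "Nadm h K \<tau> \<omega> = card (Tw \<omega>)" for \<omega> by (simp add: Nadm_def Tw_def)
  have ostat_Tw: "card (Tw \<omega>) = n \<Longrightarrow> (\<Sum>j = K - n + 1..K. ostat h K j \<omega>) = (\<Sum>m\<in>Tw \<omega>. h m \<omega>)" for \<omega>
    unfolding ostat_def Tw_def using top_sum[where g="\<lambda>m. h m \<omega>" and K=K and \<tau>=\<tau>] by simp
  have Sn_eq: "Sn = (\<Union>T\<in>TT. ES T)"
  proof (intro equalityI subsetI)
    fix \<omega> assume "\<omega> \<in> Sn"
    then have w: "\<omega> \<in> space M" "card (Tw \<omega>) = n" by (auto simp: Sn_def Nadm_Tw)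
    have "Tw \<omega> \<in> TT" using w by (auto simp: TT_def Tw_def)
    moreover have "\<omega> \<in> ES (Tw \<omega>)"
      using \<open>\<omega> \<in> Sn\<close> w TwT[of "Tw \<omega>" \<omega>] ostat_Tw[of \<omega>] by (auto simp: Sn_def ES_def Tw_def)
    ultimately show "\<omega> \<in> (\<Union>T\<in>TT. ES T)" by blast
  next
    fix \<omega> assume "\<omega> \<in> (\<Union>T\<in>TT. ES T)"
    then obtain T where T: "T \<in> TT" "\<omega> \<in> ES T" by blast
    then have "Tw \<omega> = T" using TwT[of T \<omega>] by (auto simp: TT_def ES_def)
    then show "\<omega> \<in> Sn" using T ostat_Tw[of \<omega>] by (auto simp: Sn_def ES_def TT_def Nadm_Tw)
  qed
  have Nn_eq: "Nn = (\<Union>T\<in>TT. DT T)"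
  proof (intro equalityI subsetI)
    fix \<omega> assume "\<omega> \<in> Nn"
    then have "Tw \<omega> \<in> TT" "\<omega> \<in> DT (Tw \<omega>)" by (auto simp: Nn_def Nadm_Tw TT_def Tw_def DT_def)
    then show "\<omega> \<in> (\<Union>T\<in>TT. DT T)" by blast
  next
    fix \<omega> assume "\<omega> \<in> (\<Union>T\<in>TT. DT T)"
    then obtain T where T: "T \<in> TT" "\<omega> \<in> DT T" by blast
    then have "Tw \<omega> = T" by (auto simp: TT_def DT_def Tw_def)
    then show "\<omega> \<in> Nn" using T by (auto simp: Nn_def DT_def TT_def Nadm_Tw)
  qed
  have ES_sets: "ES T \<in> sets M" if "T \<in> TT" for T
  proof -
    have fT: "finite T" using that finite_subset[of T "{1..K}"] by (auto simp: TT_def)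
    have "ES T = {\<omega> \<in> space M. (\<forall>m\<in>{1..K} - T. h' m \<omega> \<le> \<tau>) \<and> R0 < log 2 (1 + h' 0 \<omega> * P0)
      \<and> real (card T) * Ri < log 2 (1 + Pbar * (\<Sum>m\<in>T. h' m \<omega>) / (1 + h' 0 \<omega> * P0))
      \<and> (\<forall>m\<in>T. \<tau> < h' m \<omega>)}"
      using that by (auto simp: ES_def TT_def hh' subset_iff cong: sum.cong)
    also have "\<dots> \<in> sets M" using fT by measurable
    finally show ?thesis .
  qed
  have DT_sets: "DT T \<in> sets M" for T
  proof -
    have "DT T = {\<omega> \<in> space M. \<forall>m\<in>{1..K}. (m \<in> T \<longleftrightarrow> \<tau> < h' m \<omega>)}"
      by (auto simp: DT_def hh')
    also have "\<dots> \<in> sets M" by measurable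
    finally show ?thesis .
  qed
  have disj: "disjoint_family_on ES TT"
    unfolding disjoint_family_on_def
  proof (intro ballI impI)
    fix S T assume "S \<in> TT" "T \<in> TT" "S \<noteq> T"
    show "ES S \<inter> ES T = {}"
    proof (rule ccontr)
      assume "ES S \<inter> ES T \<noteq> {}"
      then obtain \<omega> where w: "\<omega> \<in> ES S" "\<omega> \<in> ES T" by blast
      have "Tw \<omega> = S" using w(1) TwT[of S \<omega>] \<open>S \<in> TT\<close> by (auto simp: ES_def TT_def)
      moreover have "Tw \<omega> = T" using w(2) TwT[of T \<omega>] \<open>T \<in> TT\<close> by (auto simp: ES_def TT_def)
      ultimately show False using \<open>S \<noteq> T\<close> by simp
    qed
  qed
  have "measure M Sn = (\<Sum>T\<in>TT. measure M (ES T))"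
    unfolding Sn_eq using finTT ES_sets disj by (intro finite_measure_finite_Union) auto
  also have "\<dots> = (\<Sum>T\<in>TT. (1 - exp (- \<tau>)) ^ (K - n) *
      (exp (- (real n * \<tau>)) * BrS \<tau> P0 Pbar (2 powr (real n * Ri) - 1) (2 powr R0 - 1) n))"
  proof (intro sum.cong refl)
    fix T assume T: "T \<in> TT"
    then have "T \<noteq> {}" using n by (auto simp: TT_def)
    then show "measure M (ES T) = (1 - exp (- \<tau>)) ^ (K - n) *
      (exp (- (real n * \<tau>)) * BrS \<tau> P0 Pbar (2 powr (real n * Ri) - 1) (2 powr R0 - 1) n)"
      unfolding ES_def using ET[OF ind dist tau P0 Pb R0 Ri, of T] T by (auto simp: TT_def)
  qed
  also have "\<dots> = real (K choose n) * ((1 - exp (- \<tau>)) ^ (K - n) *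
      (exp (- (real n * \<tau>)) * BrS \<tau> P0 Pbar (2 powr (real n * Ri) - 1) (2 powr R0 - 1) n))"
    using cardTT by simp
  finally have mS: "measure M Sn = \<dots>" .
  have Nsets: "Nn \<in> sets M" unfolding Nn_eq using finTT DT_sets by auto
  have SN: "Sn \<subseteq> Nn" by (auto simp: Sn_def Nn_def)
  have "measure M Nn * Q3 M h K \<tau> P0 Pbar R0 Ri n = measure M Sn"
  proof (cases "measure M Nn = 0")
    case True
    then have "measure M Sn = 0" using finite_measure_mono[OF SN Nsets] measure_nonneg[of M Sn] by simp
    then show ?thesis using True by simp
  next
    case False
    then show ?thesis unfolding Q3_def Sn_def[symmetric] Nn_def[symmetric] by simp
  qed
  then show ?thesis using mS by (simp add: Nn_def)
qed

end

theorem theorem2: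
  fixes Mp :: "'a measure" and h :: "nat \<Rightarrow> 'a \<Rightarrow> real"
    and M :: nat and \<tau> P0 Pbar R0 Ri :: real
  assumes "prob_space Mp"
    and "M \<ge> 1"
    and "\<tau> > 0" "P0 > 0" "Pbar > 0" "R0 > 0" "Ri > 0"
    and "prob_space.indep_vars Mp (\<lambda>_. borel) h {0..M}"
    and "\<And>m. m \<le> M \<Longrightarrow> distributed Mp lborel (h m) (exponential_density 1)"
  shows "P0_IIOL Mp h M \<tau> P0 Pbar R0 Ri =
    (let \<epsilon>0 = 2 powr R0 - 1 in
     1 - (\<Sum>n = 1..M.
       (let \<epsilon>s = 2 powr (real n * Ri) - 1;
            \<tau>n = (real n * \<tau> * Pbar / \<epsilon>s - 1) / P0;
            \<tau>bn = max \<tau>n (\<epsilon>0 / P0);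
            c = 1 + \<epsilon>s * P0 / Pbar
        in real (M choose n) * exp (- real n * \<tau>) * (1 - exp (- \<tau>)) ^ (M - n) *
           ((\<Sum>l = 1..n - 1. \<epsilon>s ^ l * Pbar powr (- real l) * P0 ^ l / fact l * exp (- \<tau>n)
                * upper_Gamma (real l + 1) ((\<tau>bn - \<tau>n) * c) / c ^ (l + 1))
            + exp (- \<epsilon>0 / P0) - exp (- \<tau>bn)
            + exp (- \<tau>n - (\<tau>bn - \<tau>n) * c) / c)))
       - (1 - exp (- \<tau>)) ^ M * exp (- \<epsilon>0 / P0))"
proof -
  note ps = assms(1)
  interpret P: prob_space Mp by (rule ps)
  have ind: "prob_space.indep_vars Mp (\<lambda>_. borel) h {0..M}" using assms(8) by simp
  have dist: "\<And>m. m \<le> M \<Longrightarrow> distributed Mp lborel (h m) (exponential_density 1)" using assms(9) by simp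
  have tau: "\<tau> > 0" and P0: "P0 > 0" and Pb: "Pbar > 0" and R0: "R0 > 0" and Ri: "Ri > 0" using assms by auto
  have N0: "measure Mp {\<omega> \<in> space Mp. Nadm h M \<tau> \<omega> = 0} = (1 - exp (- \<tau>)) ^ M"
  proof -
    have "{\<omega> \<in> space Mp. Nadm h M \<tau> \<omega> = 0} = {\<omega> \<in> space Mp. \<forall>m\<in>{1..M}. h m \<omega> \<le> \<tau>}"
      by (auto simp: Nadm_def not_less)
    also have "measure Mp \<dots> = (1 - exp (- \<tau>)) ^ card {1..M}"
      by (rule P.P_le[OF ind dist tau]) auto
    finally show ?thesis by simp
  qed
  have L0: "measure Mp {\<omega> \<in> space Mp. log 2 (1 + h 0 \<omega> * P0) > R0} = exp (- ((2 powr R0 - 1) / P0))"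
    by (rule P.L0[OF dist P0 R0]) simp
  have S: "measure Mp {\<omega> \<in> space Mp. Nadm h M \<tau> \<omega> = n} * Q3 Mp h M \<tau> P0 Pbar R0 Ri n
    = real (M choose n) * ((1 - exp (- \<tau>)) ^ (M - n) *
      (exp (- (real n * \<tau>)) * BrS \<tau> P0 Pbar (2 powr (real n * Ri) - 1) (2 powr R0 - 1) n))"
    if "n \<in> {1..M}" for n
    using that by (intro P.Sn_part[OF ind dist tau P0 Pb R0 Ri]) auto
  have T: "real (M choose n) * ((1 - exp (- \<tau>)) ^ (M - n) *
      (exp (- (real n * \<tau>)) * BrS \<tau> P0 Pbar (2 powr (real n * Ri) - 1) (2 powr R0 - 1) n))
    = (let \<epsilon>s = 2 powr (real n * Ri) - 1;
            \<tau>n = (real n * \<tau> * Pbar / \<epsilon>s - 1) / P0;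
            \<tau>bn = max \<tau>n ((2 powr R0 - 1) / P0);
            c = 1 + \<epsilon>s * P0 / Pbar
        in real (M choose n) * exp (- real n * \<tau>) * (1 - exp (- \<tau>)) ^ (M - n) *
           ((\<Sum>l = 1..n - 1. \<epsilon>s ^ l * Pbar powr (- real l) * P0 ^ l / fact l * exp (- \<tau>n)
                * upper_Gamma (real l + 1) ((\<tau>bn - \<tau>n) * c) / c ^ (l + 1))
            + exp (- (2 powr R0 - 1) / P0) - exp (- \<tau>bn)
            + exp (- \<tau>n - (\<tau>bn - \<tau>n) * c) / c))"
    if "n \<in> {1..M}" for n
  proof -
    have es: "2 powr (real n * Ri) - 1 > 0" using that Ri by simp
    have e: "exp (- real n * \<tau>) = exp (- (real n * \<tau>))" by simp
    have n1: "n \<ge> 1" using that by simp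
    show ?thesis
      unfolding BrS_eq[of n P0 Pbar "2 powr (real n * Ri) - 1" \<tau> "2 powr R0 - 1", OF n1 P0 Pb es]
      unfolding Let_def e by (simp only: mult_ac)
  qed
  have sumeq: "(\<Sum>n = 1..M. measure Mp {\<omega> \<in> space Mp. Nadm h M \<tau> \<omega> = n} * Q3 Mp h M \<tau> P0 Pbar R0 Ri n)
     = (\<Sum>n = 1..M. (let \<epsilon>s = 2 powr (real n * Ri) - 1;
            \<tau>n = (real n * \<tau> * Pbar / \<epsilon>s - 1) / P0;
            \<tau>bn = max \<tau>n ((2 powr R0 - 1) / P0);
            c = 1 + \<epsilon>s * P0 / Pbar
        in real (M choose n) * exp (- real n * \<tau>) * (1 - exp (- \<tau>)) ^ (M - n) *
           ((\<Sum>l = 1..n - 1. \<epsilon>s ^ l * Pbar powr (- real l) * P0 ^ l / fact l * exp (- \<tau>n)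
                * upper_Gamma (real l + 1) ((\<tau>bn - \<tau>n) * c) / c ^ (l + 1))
            + exp (- (2 powr R0 - 1) / P0) - exp (- \<tau>bn)
            + exp (- \<tau>n - (\<tau>bn - \<tau>n) * c) / c)))"
  proof (rule sum.cong[OF refl])
    fix n assume n: "n \<in> {1..M}"
    show "measure Mp {\<omega> \<in> space Mp. Nadm h M \<tau> \<omega> = n} * Q3 Mp h M \<tau> P0 Pbar R0 Ri n = (let \<epsilon>s = 2 powr (real n * Ri) - 1;
            \<tau>n = (real n * \<tau> * Pbar / \<epsilon>s - 1) / P0;
            \<tau>bn = max \<tau>n ((2 powr R0 - 1) / P0);
            c = 1 + \<epsilon>s * P0 / Pbar
        in real (M choose n) * exp (- real n * \<tau>) * (1 - exp (- \<tau>)) ^ (M - n) *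
           ((\<Sum>l = 1..n - 1. \<epsilon>s ^ l * Pbar powr (- real l) * P0 ^ l / fact l * exp (- \<tau>n)
                * upper_Gamma (real l + 1) ((\<tau>bn - \<tau>n) * c) / c ^ (l + 1))
            + exp (- (2 powr R0 - 1) / P0) - exp (- \<tau>bn)
            + exp (- \<tau>n - (\<tau>bn - \<tau>n) * c) / c))"
      unfolding S[OF n] T[OF n] ..
  qed
  show ?thesis
    unfolding P0_IIOL_def N0 L0 sumeq Let_def[of "2 powr R0 - 1"]
    by (simp only: minus_divide_left)
qed

end
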